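(* Let $S_{r,N}$ be an atomic exponential Puiseux semiring. Then for every positive integer $k$, the set $\mathcal{U}_k(S_{r,N})$ is an arithmetic sequence with difference $|\mathsf{n}(r)-\mathsf{d}(r)|$ (i.e., a set of consecutive terms of an arithmetic progression with that common difference).
   Context: $\mathbb{N}=\{0,1,2,\dots\}$. A numerical monoid $N$ is an additive submonoid of $\mathbb{N}$ with finite complement in $\mathbb{N}$. For $r\in\mathbb{Q}_{>0}$ write $r=\mathsf{n}(r)/\mathsf{d}(r)$ in lowest terms. The exponential Puiseux semiring $S_{r,N}$ is the additive submonoid of $\mathbb{Q}_{\ge0}$ generated by $\{r^k:k\in N\}$; if $r\in\mathbb{N}$ it equals $\mathbb{N}$; if $r\notin\mathbb{N}$ it is atomic iff $\mathsf{n}(r)>1$, with atoms $r^s$, $s\in N$. For an atomic monoid $M$ and a positive integer $k$, $\mathcal{U}_k(M)$ is the set of positive integers $m$ for which there exist atoms $a_1,\dots,a_k,a'_1,\dots,a'_m$ with $a_1+\cdots+a_k=a'_1+\cdots+a'_m$. *)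

theory Defs
  imports Complex_Main
begin

definition numerical_monoid :: "nat set \<Rightarrow> bool" where
  "numerical_monoid N \<longleftrightarrow> 0 \<in> N \<and> (\<forall>a\<in>N. \<forall>b\<in>N. a + b \<in> N) \<and> finite (UNIV - N)"

definition numer :: "rat \<Rightarrow> int" where "numer r = fst (quotient_of r)"
definition denom :: "rat \<Rightarrow> int" where "denom r = snd (quotient_of r)"

inductive_set exp_puiseux :: "rat \<Rightarrow> nat set \<Rightarrow> rat set" for r N where
  zero: "0 \<in> exp_puiseux r N"
| gen: "k \<in> N \<Longrightarrow> r ^ k \<in> exp_puiseux r N"
| add: "x \<in> exp_puiseux r N \<Longrightarrow> y \<in> exp_puiseux r N \<Longrightarrow> x + y \<in> exp_puiseux r N"

definition atoms :: "rat set \<Rightarrow> rat set" where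
  "atoms M = {a \<in> M. a \<noteq> 0 \<and> (\<forall>x\<in>M. \<forall>y\<in>M. a = x + y \<longrightarrow> x = 0 \<or> y = 0)}"

definition atomic :: "rat set \<Rightarrow> bool" where
  "atomic M \<longleftrightarrow> (\<forall>x\<in>M. x \<noteq> 0 \<longrightarrow> (\<exists>as. set as \<subseteq> atoms M \<and> sum_list as = x))"

definition U_set :: "rat set \<Rightarrow> nat \<Rightarrow> nat set" where
  "U_set M k = {m. m > 0 \<and> (\<exists>as bs. length as = k \<and> length bs = m \<and>
      set as \<subseteq> atoms M \<and> set bs \<subseteq> atoms M \<and> sum_list as = sum_list bs)}"

text \<open>A set of consecutive terms (finitely or infinitely many) of an arithmetic progression
  with common difference d.\<close>
definition arith_seq :: "nat \<Rightarrow> nat set \<Rightarrow> bool" where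
  "arith_seq d A \<longleftrightarrow> (\<exists>a I. (\<forall>i j l. i \<in> I \<longrightarrow> l \<in> I \<longrightarrow> i \<le> j \<longrightarrow> j \<le> l \<longrightarrow> j \<in> I)
      \<and> A = {a + d * i | i. i \<in> I})"

end

theory Submission
  imports Defs "HOL-Number_Theory.Cong"
begin

lemma sum_list_pos_map:
  fixes f :: "'a \<Rightarrow> 'b::linordered_semidom"
  assumes "\<And>x. f x > 0" "xs \<noteq> []"
  shows "sum_list (map f xs) > 0"
  using assms(2)
proof (induction xs)
  case Nil thus ?case by simp
next
  case (Cons a xs)
  show ?case
  proof (cases "xs = []")
    case True thus ?thesis using assms(1)[of a] by simp
  next
    case False thus ?thesis using Cons assms(1)[of a] by (simp add: add_pos_pos)
  qed
qed

lemma sum_list_nonneg_map: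
  fixes f :: "'a \<Rightarrow> 'b::linordered_semidom"
  assumes "\<And>x. f x \<ge> 0"
  shows "sum_list (map f xs) \<ge> 0"
  by (induction xs) (auto simp: assms)

lemma sum_le_len:
  fixes f :: "'a \<Rightarrow> 'b::linordered_semidom"
  assumes "\<And>x. x \<in> set xs \<Longrightarrow> f x \<le> c"
  shows "sum_list (map f xs) \<le> of_nat (length xs) * c"
  using assms by (induction xs) (auto simp: algebra_simps intro: add_mono)

lemma sum_filter_split:
  fixes f :: "'a \<Rightarrow> 'b::comm_monoid_add"
  shows "sum_list (map f xs) = sum_list (map f (filter P xs)) + sum_list (map f (filter (\<lambda>x. \<not> P x) xs))"
  by (induction xs) (auto simp: algebra_simps)

lemma sum_filter_eq:
  fixes f :: "'a \<Rightarrow> 'b::comm_semiring_1"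
  shows "sum_list (map f (filter (\<lambda>x. x = a) xs)) = of_nat (length (filter (\<lambda>x. x = a) xs)) * f a"
  by (induction xs) (auto simp: algebra_simps)

lemma dvd_sum_list_map:
  fixes f :: "'a \<Rightarrow> 'b::comm_semiring_1"
  assumes "\<And>x. x \<in> set xs \<Longrightarrow> c dvd f x"
  shows "c dvd sum_list (map f xs)"
  using assms by (induction xs) auto

lemma core_G:
  fixes p q :: int and xs ys :: "nat list"
  assumes q0: "0 < q" and qp: "q < p" and cop: "coprime p q"
  shows "int (length xs) < q \<Longrightarrow> (\<Sum>x\<leftarrow>xs. (of_int p / of_int q :: rat) ^ x) = (\<Sum>y\<leftarrow>ys. (of_int p / of_int q :: rat) ^ y) \<Longrightarrow> length ys = length xs"
proof (induction "length xs" arbitrary: xs ys rule: less_induct)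
  case less
  define \<rho> where "\<rho> = (of_int p / of_int q :: rat)"
  have \<rho>1: "\<rho> > 1" using q0 qp by (simp add: \<rho>_def)
  have eq: "(\<Sum>x\<leftarrow>xs. \<rho> ^ x) = (\<Sum>y\<leftarrow>ys. \<rho> ^ y)" using less.prems \<rho>_def by simp
  show ?case
  proof (cases "xs @ ys = []")
    case True thus ?thesis by simp
  next
    case ne: False
    define A where "A = Max (set (xs @ ys))"
    have Ain: "A \<in> set (xs @ ys)" using ne A_def by (simp del: set_append)
    have Age: "\<And>x. x \<in> set (xs @ ys) \<Longrightarrow> x \<le> A" using A_def by (simp del: set_append)
    define cx where "cx = length (filter (\<lambda>x. x = A) xs)"
    define cy where "cy = length (filter (\<lambda>x. x = A) ys)"
    have cxle: "cx \<le> length xs" using cx_def by simp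
    have ub: "(\<Sum>x\<leftarrow>xs. \<rho> ^ x) \<le> of_nat (length xs) * \<rho> ^ A"
      by (rule sum_le_len) (use Age \<rho>1 in \<open>auto intro: power_increasing\<close>)
    have lb: "of_nat cy * \<rho> ^ A \<le> (\<Sum>y\<leftarrow>ys. \<rho> ^ y)"
    proof -
      have "(\<Sum>y\<leftarrow>ys. \<rho> ^ y) = of_nat cy * \<rho> ^ A + (\<Sum>y\<leftarrow>filter (\<lambda>y. \<not> y = A) ys. \<rho> ^ y)"
        using sum_filter_split[of "\<lambda>y. \<rho> ^ y" ys "\<lambda>y. y = A"] sum_filter_eq[of "\<lambda>y. \<rho> ^ y" A ys]
        by (simp add: cy_def)
      moreover have "(\<Sum>y\<leftarrow>filter (\<lambda>y. \<not> y = A) ys. \<rho> ^ y) \<ge> 0"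
        by (rule sum_list_nonneg_map) (use \<rho>1 in simp)
      ultimately show ?thesis by simp
    qed
    have "of_nat cy * \<rho> ^ A < of_int q * \<rho> ^ A"
    proof -
      have "of_nat cy * \<rho> ^ A \<le> of_nat (length xs) * \<rho> ^ A" using lb ub eq by simp
      also have "\<dots> < of_int q * \<rho> ^ A"
      proof (rule mult_strict_right_mono)
        have "(of_int (int (length xs)) :: rat) < of_int q" using less.prems(1) by (simp only: of_int_less_iff)
        thus "(of_nat (length xs) :: rat) < of_int q" by simp
      qed (use \<rho>1 in simp)
      finally show ?thesis .
    qed
    moreover have "\<rho> ^ A > 0" using \<rho>1 by simp
    ultimately have "(of_nat cy :: rat) < of_int q" by (simp only: mult_less_cancel_right)
    hence "(of_int (int cy) :: rat) < of_int q" by simp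
    hence cyq: "int cy < q" by (simp only: of_int_less_iff)
    have cxq: "int cx < q" using cxle less.prems(1) by simp
    define W where "W x = p ^ x * q ^ (A - x)" for x
    have conv: "\<rho> ^ x * of_int q ^ A = of_int (W x)" if "x \<le> A" for x
    proof -
      have qA: "(of_int q :: rat) ^ A = of_int q ^ x * of_int q ^ (A - x)"
        using that by (simp flip: power_add)
      have pq: "\<rho> * of_int q = of_int p" using q0 by (simp add: \<rho>_def)
      have "\<rho> ^ x * of_int q ^ A = (\<rho> * of_int q) ^ x * of_int q ^ (A - x)"
        by (simp only: qA power_mult_distrib mult.assoc)
      also have "\<dots> = of_int (W x)" by (simp only: pq W_def of_int_mult of_int_power)
      finally show ?thesis .
    qed
    have sumconv: "(\<Sum>x\<leftarrow>zs. \<rho> ^ x) * of_int q ^ A = of_int (\<Sum>x\<leftarrow>zs. W x)"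
      if "\<And>x. x \<in> set zs \<Longrightarrow> x \<le> A" for zs
      using that
    proof (induction zs)
      case Nil thus ?case by simp
    next
      case (Cons a zs)
      have "a \<le> A" using Cons.prems by simp
      hence "\<rho> ^ a * of_int q ^ A = of_int (W a)" by (rule conv)
      moreover have "(\<Sum>x\<leftarrow>zs. \<rho> ^ x) * of_int q ^ A = of_int (\<Sum>x\<leftarrow>zs. W x)"
        using Cons.IH Cons.prems by simp
      ultimately show ?case by (simp add: distrib_right)
    qed
    have intEq: "(\<Sum>x\<leftarrow>xs. W x) = (\<Sum>y\<leftarrow>ys. W y)"
    proof -
      have "of_int (\<Sum>x\<leftarrow>xs. W x) = (of_int (\<Sum>y\<leftarrow>ys. W y) :: rat)"
      proof -
        have hx: "(\<Sum>x\<leftarrow>xs. \<rho> ^ x) * of_int q ^ A = of_int (\<Sum>x\<leftarrow>xs. W x)"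
          by (rule sumconv) (use Age in auto)
        have hy: "(\<Sum>x\<leftarrow>ys. \<rho> ^ x) * of_int q ^ A = of_int (\<Sum>x\<leftarrow>ys. W x)"
          by (rule sumconv) (use Age in auto)
        show ?thesis using hx hy eq by simp
      qed
      thus ?thesis by (simp only: of_int_eq_iff)
    qed
    have WA: "W A = p ^ A" by (simp add: W_def)
    have splitW: "(\<Sum>x\<leftarrow>zs. W x) = int (length (filter (\<lambda>x. x = A) zs)) * p ^ A + (\<Sum>x\<leftarrow>filter (\<lambda>x. \<not> x = A) zs. W x)"
      for zs
      using sum_filter_split[of W zs "\<lambda>x. x = A"] sum_filter_eq[of W A zs] by (simp add: WA)
    have dvdR: "q dvd (\<Sum>x\<leftarrow>filter (\<lambda>x. \<not> x = A) zs. W x)" if "\<And>x. x \<in> set zs \<Longrightarrow> x \<le> A" for zs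
    proof (rule dvd_sum_list_map)
      fix x assume "x \<in> set (filter (\<lambda>x. \<not> x = A) zs)"
      hence "x < A" using that by fastforce
      hence "A - x = Suc (A - x - 1)" by simp
      hence "q ^ (A - x) = q * q ^ (A - x - 1)" by (metis power_Suc)
      thus "q dvd W x" unfolding W_def by simp
    qed
    have "q dvd (int cx - int cy) * p ^ A"
    proof -
      have "int cx * p ^ A + (\<Sum>x\<leftarrow>filter (\<lambda>x. \<not> x = A) xs. W x) = int cy * p ^ A + (\<Sum>x\<leftarrow>filter (\<lambda>x. \<not> x = A) ys. W x)"
        using intEq splitW[of xs] splitW[of ys] cx_def cy_def by simp
      hence "(int cx - int cy) * p ^ A = (\<Sum>x\<leftarrow>filter (\<lambda>x. \<not> x = A) ys. W x) - (\<Sum>x\<leftarrow>filter (\<lambda>x. \<not> x = A) xs. W x)"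
        by (simp add: algebra_simps)
      moreover have "q dvd (\<Sum>x\<leftarrow>filter (\<lambda>x. \<not> x = A) ys. W x) - (\<Sum>x\<leftarrow>filter (\<lambda>x. \<not> x = A) xs. W x)"
        using dvdR[of xs] dvdR[of ys] Age by (intro dvd_diff) auto
      ultimately show ?thesis by simp
    qed
    moreover have "coprime q (p ^ A)" using cop by (simp add: coprime_commute)
    ultimately have qd: "q dvd (int cx - int cy)" by (simp add: coprime_dvd_mult_left_iff)
    have cxy: "cx = cy"
    proof (rule ccontr)
      assume "cx \<noteq> cy"
      hence "int cx - int cy \<noteq> 0" by simp
      hence "\<bar>q\<bar> \<le> \<bar>int cx - int cy\<bar>" using qd by (rule dvd_imp_le_int)
      hence "q \<le> \<bar>int cx - int cy\<bar>" using q0 by simp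
      thus False using cxq cyq by linarith
    qed
    have cxpos: "cx > 0 \<longleftrightarrow> A \<in> set xs" unfolding cx_def by (simp add: filter_empty_conv)
    have cypos: "cy > 0 \<longleftrightarrow> A \<in> set ys" unfolding cy_def by (simp add: filter_empty_conv)
    have Ax: "A \<in> set xs" and Ay: "A \<in> set ys" using Ain cxpos cypos cxy by auto
    have l1: "length (remove1 A xs) < length xs" using Ax length_pos_if_in_set[OF Ax] by (simp add: length_remove1)
    have s1: "(\<Sum>x\<leftarrow>xs. \<rho> ^ x) = \<rho> ^ A + (\<Sum>x\<leftarrow>remove1 A xs. \<rho> ^ x)"
      using Ax by (rule sum_list_map_remove1)
    have s2: "(\<Sum>x\<leftarrow>ys. \<rho> ^ x) = \<rho> ^ A + (\<Sum>x\<leftarrow>remove1 A ys. \<rho> ^ x)"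
      using Ay by (rule sum_list_map_remove1)
    have h1: "(\<Sum>x\<leftarrow>remove1 A xs. \<rho> ^ x) = (\<Sum>x\<leftarrow>remove1 A ys. \<rho> ^ x)"
      using s1 s2 eq by linarith
    have h2: "int (length (remove1 A xs)) < q" using l1 less.prems(1) by linarith
    have "length (remove1 A ys) = length (remove1 A xs)"
      by (rule less.hyps[OF l1 h2 h1[unfolded \<rho>_def]])
    hence "length ys - 1 = length xs - 1" using Ax Ay by (simp add: length_remove1)
    thus ?thesis using length_pos_if_in_set[OF Ax] length_pos_if_in_set[OF Ay] by linarith
  qed
qed

lemma exp_puiseux_list:
  assumes "x \<in> exp_puiseux r N"
  shows "\<exists>ss. set ss \<subseteq> N \<and> x = (\<Sum>s\<leftarrow>ss. r ^ s)"
  using assms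
proof (induction rule: exp_puiseux.induct)
  case zero
  show ?case by (rule exI[of _ "[]"]) simp
next
  case (gen k)
  show ?case by (rule exI[of _ "[k]"]) (simp add: gen)
next
  case (add x y)
  then obtain s1 s2 where "set s1 \<subseteq> N" "x = (\<Sum>s\<leftarrow>s1. r ^ s)" "set s2 \<subseteq> N" "y = (\<Sum>s\<leftarrow>s2. r ^ s)"
    by blast
  thus ?case by (intro exI[of _ "s1 @ s2"]) simp
qed

lemma list_in_exp_puiseux:
  "set ss \<subseteq> N \<Longrightarrow> (\<Sum>s\<leftarrow>ss. r ^ s) \<in> exp_puiseux r N"
  by (induction ss) (auto intro: exp_puiseux.intros)

lemma mult_in_exp_puiseux:
  "g \<in> exp_puiseux r N \<Longrightarrow> of_nat j * g \<in> exp_puiseux r N"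
  by (induction j) (auto intro: exp_puiseux.intros simp: distrib_right)

lemma atom_is_gen:
  assumes r0: "r > 0" and a: "a \<in> atoms (exp_puiseux r N)"
  shows "\<exists>s\<in>N. a = r ^ s"
proof -
  have aS: "a \<in> exp_puiseux r N" and a0: "a \<noteq> 0"
    and at: "\<And>x y. x \<in> exp_puiseux r N \<Longrightarrow> y \<in> exp_puiseux r N \<Longrightarrow> a = x + y \<Longrightarrow> x = 0 \<or> y = 0"
    using a unfolding atoms_def by auto
  obtain ss where ss: "set ss \<subseteq> N" "a = (\<Sum>s\<leftarrow>ss. r ^ s)" using exp_puiseux_list[OF aS] by blast
  then obtain s rest where srest: "ss = s # rest" using a0 by (cases ss) auto
  show ?thesis
  proof (cases "rest = []")
    case True thus ?thesis using ss srest by auto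
  next
    case False
    have p: "(\<Sum>s\<leftarrow>rest. r ^ s) > 0" by (rule sum_list_pos_map) (use r0 False in auto)
    have "r ^ s \<in> exp_puiseux r N" using ss srest by (auto intro: exp_puiseux.gen)
    moreover have "(\<Sum>s\<leftarrow>rest. r ^ s) \<in> exp_puiseux r N"
      using ss srest by (intro list_in_exp_puiseux) auto
    moreover have "a = r ^ s + (\<Sum>s\<leftarrow>rest. r ^ s)" using ss srest by simp
    ultimately have "r ^ s = 0 \<or> (\<Sum>s\<leftarrow>rest. r ^ s) = 0" using at by blast
    thus ?thesis using p r0 by simp
  qed
qed

lemma atoms_list_gen:
  assumes r0: "r > 0" and "set as \<subseteq> atoms (exp_puiseux r N)"
  shows "\<exists>xs. as = map (\<lambda>s. r ^ s) xs \<and> set xs \<subseteq> N"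
  using assms(2)
proof (induction as)
  case Nil thus ?case by simp
next
  case (Cons a as)
  then obtain xs where "as = map (\<lambda>s. r ^ s) xs" "set xs \<subseteq> N" by auto
  moreover obtain s where "s \<in> N" "a = r ^ s" using atom_is_gen[OF r0] Cons.prems by auto
  ultimately show ?case by (intro exI[of _ "s # xs"]) auto
qed

lemma sum_list_ones:
  "set bs \<subseteq> {1::rat} \<Longrightarrow> sum_list bs = of_nat (length bs)"
  by (induction bs) auto

lemma pow_inv_aux:
  fixes t :: rat
  assumes "t \<noteq> 0" "x \<le> B"
  shows "t ^ x = t ^ B * inverse t ^ (B - x)"
proof -
  have "t ^ B = t ^ x * t ^ (B - x)" using assms(2) by (simp flip: power_add)
  hence "t ^ B * inverse t ^ (B - x) = t ^ x * (t ^ (B - x) * inverse (t ^ (B - x)))"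
    by (simp add: power_inverse mult.assoc)
  also have "\<dots> = t ^ x" using assms(1) by simp
  finally show ?thesis by simp
qed

context
  fixes n d :: nat and N :: "nat set"
  assumes d2: "d \<ge> 2" and n2: "n \<ge> 2" and cop: "coprime n d" and nm: "numerical_monoid N"
begin

abbreviation "rr \<equiv> (of_nat n / of_nat d :: rat)"
abbreviation "TT \<equiv> (if n > d then d else n)"

lemma n_ne_d: "n \<noteq> d"
  using cop d2 by auto

lemma rr_pos: "rr > 0" using d2 n2 by simp

lemma core1:
  assumes "length xs < TT" "(\<Sum>x\<leftarrow>xs. rr ^ x) = (\<Sum>y\<leftarrow>ys. rr ^ y)"
  shows "length ys = length xs"
proof (cases "n > d")
  case True
  have "int (length xs) < int d" using assms(1) True by simp
  moreover have "coprime (int n) (int d)" using cop by (simp add: coprime_int_iff)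
  ultimately show ?thesis
    using core_G[of "int d" "int n" xs ys] assms(2) True d2 by simp
next
  case False
  hence nd: "n < d" using n_ne_d by simp
  have len: "int (length xs) < int n" using assms(1) False by simp
  have cop': "coprime (int d) (int n)" using cop by (simp add: coprime_int_iff coprime_commute)
  define B where "B = sum_list (xs @ ys)"
  define \<rho> where "\<rho> = (of_int (int d) / of_int (int n) :: rat)"
  have conv: "rr ^ x = rr ^ B * \<rho> ^ (B - x)" if "x \<le> B" for x
    using pow_inv_aux[of rr x B] that d2 n2 by (simp add: \<rho>_def)
  have sconv: "(\<Sum>x\<leftarrow>zs. rr ^ x) = rr ^ B * (\<Sum>x\<leftarrow>map (\<lambda>x. B - x) zs. \<rho> ^ x)"
    if "\<And>x. x \<in> set zs \<Longrightarrow> x \<le> B" for zs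
    using that
  proof (induction zs)
    case Nil thus ?case by simp
  next
    case (Cons a zs)
    have "a \<le> B" using Cons.prems by simp
    thus ?case using Cons.IH Cons.prems conv[of a] by (simp add: distrib_left)
  qed
  have leB: "x \<le> B" if "x \<in> set (xs @ ys)" for x
    unfolding B_def using that by (rule member_le_sum_list) simp
  have "rr ^ B * (\<Sum>x\<leftarrow>map (\<lambda>x. B - x) xs. \<rho> ^ x) = rr ^ B * (\<Sum>x\<leftarrow>map (\<lambda>x. B - x) ys. \<rho> ^ x)"
  proof -
    have hx: "(\<Sum>x\<leftarrow>xs. rr ^ x) = rr ^ B * (\<Sum>x\<leftarrow>map (\<lambda>x. B - x) xs. \<rho> ^ x)"
      by (rule sconv) (use leB in auto)
    have hy: "(\<Sum>x\<leftarrow>ys. rr ^ x) = rr ^ B * (\<Sum>x\<leftarrow>map (\<lambda>x. B - x) ys. \<rho> ^ x)"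
      by (rule sconv) (use leB in auto)
    show ?thesis using hx hy assms(2) by argo
  qed
  moreover have "rr ^ B \<noteq> 0" using d2 n2 by simp
  ultimately have eq: "(\<Sum>x\<leftarrow>map (\<lambda>x. B - x) xs. \<rho> ^ x) = (\<Sum>x\<leftarrow>map (\<lambda>x. B - x) ys. \<rho> ^ x)"
    using mult_left_cancel by blast
  have "length (map (\<lambda>x. B - x) ys) = length (map (\<lambda>x. B - x) xs)"
    by (rule core_G[of "int n" "int d"]) (use nd n2 cop' len eq \<rho>_def in auto)
  thus ?thesis by simp
qed

abbreviation "SS \<equiv> exp_puiseux rr N"
abbreviation "dd \<equiv> nat \<bar>int n - int d\<bar>"

lemma TT2: "TT \<ge> 2" using d2 n2 by simp

lemma atoms_gen:
  assumes sN: "s \<in> N"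
  shows "rr ^ s \<in> atoms SS"
  unfolding atoms_def
proof (intro CollectI conjI ballI impI)
  show "rr ^ s \<in> SS" using sN by (rule exp_puiseux.gen)
  show "rr ^ s \<noteq> 0" using d2 n2 by simp
next
  fix x y assume x: "x \<in> SS" and y: "y \<in> SS" and e: "rr ^ s = x + y"
  obtain xs where xs: "set xs \<subseteq> N" "x = (\<Sum>s\<leftarrow>xs. rr ^ s)" using exp_puiseux_list[OF x] by blast
  obtain ys where ys: "set ys \<subseteq> N" "y = (\<Sum>s\<leftarrow>ys. rr ^ s)" using exp_puiseux_list[OF y] by blast
  have "(\<Sum>z\<leftarrow>[s]. rr ^ z) = (\<Sum>z\<leftarrow>xs @ ys. rr ^ z)" using e xs ys by simp
  moreover have "length [s] < TT" using TT2 by simp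
  ultimately have "length (xs @ ys) = length [s]" by (intro core1) 
  hence "xs = [] \<or> ys = []" by (cases xs; cases ys) auto
  thus "x = 0 \<or> y = 0" using xs ys by auto
qed

lemma L1:
  assumes "k < TT" "m \<in> U_set SS k"
  shows "m = k"
proof -
  obtain as bs where ab: "length as = k" "length bs = m" "set as \<subseteq> atoms SS" "set bs \<subseteq> atoms SS"
    "sum_list as = sum_list bs"
    using assms(2) unfolding U_set_def by blast
  obtain xs where xs: "as = map (\<lambda>s. rr ^ s) xs" using atoms_list_gen[OF rr_pos ab(3)] by blast
  obtain ys where ys: "bs = map (\<lambda>s. rr ^ s) ys" using atoms_list_gen[OF rr_pos ab(4)] by blast
  have "length ys = length xs"
    by (rule core1) (use ab xs ys assms(1) in auto)
  thus ?thesis using ab xs ys by simp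
qed

lemma Usym: "m \<in> U_set M k \<Longrightarrow> k > 0 \<Longrightarrow> k \<in> U_set M m"
  unfolding U_set_def by (auto; metis)

lemma conductor: "\<exists>c. \<forall>s\<ge>c. s \<in> N"
proof -
  have "finite (UNIV - N)" using nm unfolding numerical_monoid_def by blast
  then obtain c0 where "\<forall>x\<in>UNIV - N. x \<le> c0" using finite_nat_set_iff_bounded_le by blast
  hence "\<forall>s\<ge>Suc c0. s \<in> N" by force
  thus ?thesis by blast
qed

lemma rr_step: "of_nat n * rr ^ S = of_nat d * rr ^ Suc S"
  using d2 by (simp add: field_simps)

lemma rep_atoms: "s \<in> N \<Longrightarrow> set (replicate m (rr ^ s)) \<subseteq> atoms SS"
  using atoms_gen[of s] by (cases "m = 0") auto

lemma chain_up:
  assumes nd: "d < n" and c: "\<forall>s\<ge>c. s \<in> N"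
  shows "\<forall>S kk. c + j \<le> S \<longrightarrow> d \<le> kk \<longrightarrow>
    (\<exists>bs. length bs = kk + j * (n - d) \<and> set bs \<subseteq> atoms SS \<and> sum_list bs = of_nat kk * rr ^ S)"
proof (induction j)
  case 0
  show ?case
  proof (intro allI impI)
    fix S kk assume S: "c + 0 \<le> S"
    hence "S \<in> N" using c by simp
    hence "set (replicate kk (rr ^ S)) \<subseteq> atoms SS" by (rule rep_atoms)
    moreover have "length (replicate kk (rr ^ S)) = kk + 0 * (n - d)" by simp
    moreover have "sum_list (replicate kk (rr ^ S)) = of_nat kk * rr ^ S" by (simp add: sum_list_replicate)
    ultimately show "\<exists>bs. length bs = kk + 0 * (n - d) \<and> set bs \<subseteq> atoms SS \<and> sum_list bs = of_nat kk * rr ^ S"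
      by (intro exI conjI)
  qed
next
  case (Suc j)
  show ?case
  proof (intro allI impI)
    fix S kk assume S: "c + Suc j \<le> S" and kk: "d \<le> kk"
    define S' where "S' = S - 1"
    have S': "S = Suc S'" "c + j \<le> S'" using S unfolding S'_def by simp_all
    have "\<exists>bs'. length bs' = n + j * (n - d) \<and> set bs' \<subseteq> atoms SS \<and>
      sum_list bs' = of_nat n * rr ^ S'"
      by (rule Suc.IH[rule_format]) (use S' nd in simp_all)
    then obtain bs' where bs0: "length bs' = n + j * (n - d) \<and> set bs' \<subseteq> atoms SS \<and>
      sum_list bs' = of_nat n * rr ^ S'" ..
    have bs'1: "length bs' = n + j * (n - d)" using bs0 by (rule conjunct1)
    have bs'2: "set bs' \<subseteq> atoms SS" using bs0 by (rule conjunct1[OF conjunct2])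
    have bs'3: "sum_list bs' = of_nat n * rr ^ S'" using bs0 by (rule conjunct2[OF conjunct2])
    have "S \<in> N" using c S by simp
    hence aS: "set (replicate (kk - d) (rr ^ S)) \<subseteq> atoms SS" by (rule rep_atoms)
    define bs where "bs = replicate (kk - d) (rr ^ S) @ bs'"
    have "length bs = kk + Suc j * (n - d)" using bs'1 kk nd unfolding bs_def by simp
    moreover have "set bs \<subseteq> atoms SS" using bs'2 aS unfolding bs_def by simp
    moreover have "sum_list bs = of_nat kk * rr ^ S"
    proof -
      have "sum_list bs = of_nat (kk - d) * rr ^ S + of_nat n * rr ^ S'"
        unfolding bs_def using bs'3 by (simp add: sum_list_replicate)
      also have "of_nat n * rr ^ S' = of_nat d * rr ^ S" using rr_step[of S'] S'(1) by simp
      also have "of_nat (kk - d) * rr ^ S + of_nat d * rr ^ S = of_nat kk * rr ^ S"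
        using kk by (simp add: of_nat_diff algebra_simps)
      finally show ?thesis .
    qed
    ultimately show "\<exists>bs. length bs = kk + Suc j * (n - d) \<and> set bs \<subseteq> atoms SS \<and> sum_list bs = of_nat kk * rr ^ S"
      by (intro exI conjI)
  qed
qed

lemma chain_down:
  assumes nd: "n < d" and c: "\<forall>s\<ge>c. s \<in> N"
  shows "\<forall>S kk. c \<le> S \<longrightarrow> n \<le> kk \<longrightarrow>
    (\<exists>bs. length bs = kk + j * (d - n) \<and> set bs \<subseteq> atoms SS \<and> sum_list bs = of_nat kk * rr ^ S)"
proof (induction j)
  case 0
  show ?case
  proof (intro allI impI)
    fix S kk assume S: "c \<le> S"
    hence "S \<in> N" using c by simp
    hence "set (replicate kk (rr ^ S)) \<subseteq> atoms SS" by (rule rep_atoms)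
    moreover have "length (replicate kk (rr ^ S)) = kk + 0 * (d - n)" by simp
    moreover have "sum_list (replicate kk (rr ^ S)) = of_nat kk * rr ^ S" by (simp add: sum_list_replicate)
    ultimately show "\<exists>bs. length bs = kk + 0 * (d - n) \<and> set bs \<subseteq> atoms SS \<and> sum_list bs = of_nat kk * rr ^ S"
      by (intro exI conjI)
  qed
next
  case (Suc j)
  show ?case
  proof (intro allI impI)
    fix S kk assume S: "c \<le> S" and kk: "n \<le> kk"
    have "\<exists>bs'. length bs' = d + j * (d - n) \<and> set bs' \<subseteq> atoms SS \<and>
      sum_list bs' = of_nat d * rr ^ Suc S"
      by (rule Suc.IH[rule_format]) (use S nd in simp_all)
    then obtain bs' where bs0: "length bs' = d + j * (d - n) \<and> set bs' \<subseteq> atoms SS \<and>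
      sum_list bs' = of_nat d * rr ^ Suc S" ..
    have bs'1: "length bs' = d + j * (d - n)" using bs0 by (rule conjunct1)
    have bs'2: "set bs' \<subseteq> atoms SS" using bs0 by (rule conjunct1[OF conjunct2])
    have bs'3: "sum_list bs' = of_nat d * rr ^ Suc S" using bs0 by (rule conjunct2[OF conjunct2])
    have "S \<in> N" using c S by simp
    hence aS: "set (replicate (kk - n) (rr ^ S)) \<subseteq> atoms SS" by (rule rep_atoms)
    define bs where "bs = replicate (kk - n) (rr ^ S) @ bs'"
    have "length bs = kk + Suc j * (d - n)" using bs'1 kk nd unfolding bs_def by simp
    moreover have "set bs \<subseteq> atoms SS" using bs'2 aS unfolding bs_def by simp
    moreover have "sum_list bs = of_nat kk * rr ^ S"
    proof -
      have "sum_list bs = of_nat (kk - n) * rr ^ S + of_nat d * rr ^ Suc S"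
        unfolding bs_def using bs'3 by (simp add: sum_list_replicate del: power_Suc)
      also have "of_nat d * rr ^ Suc S = of_nat n * rr ^ S" using rr_step[of S] by simp
      also have "of_nat (kk - n) * rr ^ S + of_nat n * rr ^ S = of_nat kk * rr ^ S"
        using kk by (simp add: of_nat_diff algebra_simps)
      finally show ?thesis .
    qed
    ultimately show "\<exists>bs. length bs = kk + Suc j * (d - n) \<and> set bs \<subseteq> atoms SS \<and> sum_list bs = of_nat kk * rr ^ S"
      by (intro exI conjI)
  qed
qed

lemma L2:
  assumes "TT \<le> k" "k > 0"
  shows "k + j * dd \<in> U_set SS k"
proof -
  obtain c where c: "\<forall>s\<ge>c. s \<in> N" using conductor by blast
  define S where "S = c + j"
  have "\<exists>bs. length bs = k + j * dd \<and> set bs \<subseteq> atoms SS \<and> sum_list bs = of_nat k * rr ^ S"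
  proof (cases "d < n")
    case True
    hence e: "dd = n - d" by simp
    have dk: "d \<le> k" using assms(1) True by simp
    have "\<exists>bs. length bs = k + j * (n - d) \<and> set bs \<subseteq> atoms SS \<and> sum_list bs = of_nat k * rr ^ S"
      by (rule chain_up[OF True c, of j, rule_format]) (simp_all add: S_def dk)
    thus ?thesis by (simp only: e)
  next
    case False
    hence nd: "n < d" using n_ne_d by simp
    hence e: "dd = d - n" by simp
    have dk: "n \<le> k" using assms(1) False by simp
    have "\<exists>bs. length bs = k + j * (d - n) \<and> set bs \<subseteq> atoms SS \<and> sum_list bs = of_nat k * rr ^ S"
      by (rule chain_down[OF nd c, of j, rule_format]) (simp_all add: S_def dk)
    thus ?thesis by (simp only: e)
  qed
  then obtain bs where bs0: "length bs = k + j * dd \<and> set bs \<subseteq> atoms SS \<and> sum_list bs = of_nat k * rr ^ S" ..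
  have bs: "length bs = k + j * dd" "set bs \<subseteq> atoms SS" "sum_list bs = of_nat k * rr ^ S"
    using bs0 by (rule conjunct1, rule conjunct1[OF conjunct2], rule conjunct2[OF conjunct2])
  have "S \<in> N" using c S_def by simp
  hence "rr ^ S \<in> atoms SS" by (rule atoms_gen)
  hence "set (replicate k (rr ^ S)) \<subseteq> atoms SS" by (cases "k = 0") auto
  moreover have "length (replicate k (rr ^ S)) = k" by simp
  moreover have "sum_list (replicate k (rr ^ S)) = sum_list bs" using bs(3) by (simp add: sum_list_replicate)
  moreover have "k + j * dd > 0" using assms(2) by simp
  ultimately show ?thesis unfolding U_set_def using bs(1,2) by (intro CollectI conjI exI) (assumption+)
qed

lemma cop_diff: "coprime (int d) (int n - int d)"
proof -
  have "coprime (int d) (int n)" using cop by (simp add: coprime_int_iff coprime_commute)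
  thus ?thesis by (smt (verit) gcd_add2 is_unit_gcd)
qed

lemma L3core:
  assumes eq: "(\<Sum>x\<leftarrow>xs. rr ^ x) = (\<Sum>y\<leftarrow>ys. rr ^ y)"
  shows "[int (length xs) = int (length ys)] (mod (int n - int d))"
proof -
  define B where "B = sum_list (xs @ ys)"
  define W where "W x = n ^ x * d ^ (B - x)" for x
  have leB: "x \<le> B" if "x \<in> set (xs @ ys)" for x
    unfolding B_def using that by (rule member_le_sum_list) simp
  have conv: "rr ^ x * of_nat d ^ B = of_nat (W x)" if "x \<le> B" for x
  proof -
    have qA: "(of_nat d :: rat) ^ B = of_nat d ^ x * of_nat d ^ (B - x)"
      using that by (simp flip: power_add)
    have pq: "rr * of_nat d = of_nat n" using d2 by simp
    have "rr ^ x * of_nat d ^ B = (rr * of_nat d) ^ x * of_nat d ^ (B - x)"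
      by (simp only: qA power_mult_distrib mult.assoc)
    also have "\<dots> = of_nat (W x)" by (simp only: pq W_def of_nat_mult of_nat_power)
    finally show ?thesis .
  qed
  have sconv: "(\<Sum>x\<leftarrow>zs. rr ^ x) * of_nat d ^ B = of_nat (\<Sum>x\<leftarrow>zs. W x)"
    if "\<And>x. x \<in> set zs \<Longrightarrow> x \<le> B" for zs
    using that
  proof (induction zs)
    case Nil thus ?case by simp
  next
    case (Cons a zs)
    have "a \<le> B" using Cons.prems by simp
    hence "rr ^ a * of_nat d ^ B = of_nat (W a)" by (rule conv)
    moreover have "(\<Sum>x\<leftarrow>zs. rr ^ x) * of_nat d ^ B = of_nat (\<Sum>x\<leftarrow>zs. W x)"
      using Cons.IH Cons.prems by simp
    ultimately show ?case by (simp add: distrib_right)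
  qed
  have intEq: "(\<Sum>x\<leftarrow>xs. W x) = (\<Sum>y\<leftarrow>ys. W y)"
  proof -
    have hx: "(\<Sum>x\<leftarrow>xs. rr ^ x) * of_nat d ^ B = of_nat (\<Sum>x\<leftarrow>xs. W x)"
      by (rule sconv) (use leB in auto)
    have hy: "(\<Sum>x\<leftarrow>ys. rr ^ x) * of_nat d ^ B = of_nat (\<Sum>x\<leftarrow>ys. W x)"
      by (rule sconv) (use leB in auto)
    have "(of_nat (\<Sum>x\<leftarrow>xs. W x) :: rat) = of_nat (\<Sum>x\<leftarrow>ys. W x)" using hx hy eq by argo
    thus ?thesis by (simp only: of_nat_eq_iff)
  qed
  define M where "M = int n - int d"
  have nd: "[int n = int d] (mod M)" unfolding M_def by (simp add: cong_iff_dvd_diff)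
  have congW: "[int (\<Sum>x\<leftarrow>zs. W x) = int (length zs) * int d ^ B] (mod M)"
    if "\<And>x. x \<in> set zs \<Longrightarrow> x \<le> B" for zs
    using that
  proof (induction zs)
    case Nil thus ?case by simp
  next
    case (Cons a zs)
    have aB: "a \<le> B" using Cons.prems by simp
    have "[int n ^ a * int d ^ (B - a) = int d ^ a * int d ^ (B - a)] (mod M)"
      by (intro cong_mult cong_pow nd cong_refl)
    moreover have "int d ^ a * int d ^ (B - a) = int d ^ B" using aB by (simp flip: power_add)
    ultimately have c1: "[int (W a) = int d ^ B] (mod M)" by (simp add: W_def)
    have c2: "[int (\<Sum>x\<leftarrow>zs. W x) = int (length zs) * int d ^ B] (mod M)"
      using Cons.IH Cons.prems by simp
    have "[int (W a) + int (\<Sum>x\<leftarrow>zs. W x) = int d ^ B + int (length zs) * int d ^ B] (mod M)"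
      using c1 c2 by (rule cong_add)
    thus ?case by (simp add: algebra_simps)
  qed
  have "[int (length xs) * int d ^ B = int (length ys) * int d ^ B] (mod M)"
  proof -
    have a: "[int (\<Sum>x\<leftarrow>xs. W x) = int (length xs) * int d ^ B] (mod M)"
      by (rule congW) (use leB in auto)
    have b: "[int (\<Sum>x\<leftarrow>ys. W x) = int (length ys) * int d ^ B] (mod M)"
      by (rule congW) (use leB in auto)
    from a b intEq show ?thesis by (metis cong_sym cong_trans)
  qed
  moreover have "coprime (int d ^ B) M" unfolding M_def using cop_diff by simp
  ultimately show ?thesis unfolding M_def by (simp add: cong_mult_rcancel)
qed

lemma L3:
  assumes "m \<in> U_set SS k"
  shows "[m = k] (mod dd)"
proof -
  obtain as bs where ab: "length as = k" "length bs = m" "set as \<subseteq> atoms SS" "set bs \<subseteq> atoms SS"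
    "sum_list as = sum_list bs"
    using assms unfolding U_set_def by blast
  obtain xs where xs: "as = map (\<lambda>s. rr ^ s) xs" using atoms_list_gen[OF rr_pos ab(3)] by blast
  obtain ys where ys: "bs = map (\<lambda>s. rr ^ s) ys" using atoms_list_gen[OF rr_pos ab(4)] by blast
  have "[int (length xs) = int (length ys)] (mod (int n - int d))"
    by (rule L3core) (use ab xs ys in simp)
  hence "[int k = int m] (mod \<bar>int n - int d\<bar>)" using ab xs ys by (simp add: cong_abs)
  moreover have "\<bar>int n - int d\<bar> = int dd" by simp
  ultimately have "[int k = int m] (mod int dd)" by simp
  hence "[k = m] (mod dd)" by (simp only: cong_int_iff)
  thus ?thesis by (rule cong_sym)
qed

lemma main_gen:
  assumes k0: "k > 0"
  shows "arith_seq dd (U_set SS k)"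
proof -
  have dd0: "dd > 0" using n_ne_d by simp
  have pos: "m > 0" if "m \<in> U_set SS k'" for m k' using that unfolding U_set_def by simp
  have kin: "k \<in> U_set SS k" if "m \<in> U_set SS k" for m
  proof (cases "TT \<le> k")
    case True
    thus ?thesis using L2[OF True k0, of 0] by (simp only: mult_0 add_0_right)
  next
    case False
    hence "k < TT" by simp
    hence "m = k" using that by (rule L1)
    thus ?thesis using that by simp
  qed
  have up: "TT \<le> k" if "m \<in> U_set SS k" "k < m" for m
  proof (rule ccontr)
    assume "\<not> TT \<le> k"
    hence "k < TT" by simp
    hence "m = k" using that(1) by (rule L1)
    thus False using that(2) by simp
  qed
  have down: "TT \<le> m" if "m \<in> U_set SS k" "m < k" for m
  proof (rule ccontr)
    assume "\<not> TT \<le> m"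
    hence "m < TT" by simp
    moreover have "k \<in> U_set SS m" by (rule Usym[OF that(1) k0])
    ultimately have "k = m" by (rule L1)
    thus False using that by simp
  qed
  have key: "m' \<in> U_set SS k" if m1: "m1 \<in> U_set SS k" and m2: "m2 \<in> U_set SS k"
    and le1: "m1 \<le> m'" and le2: "m' \<le> m2" and cg: "[m' = k] (mod dd)" for m1 m2 m'
  proof -
    consider "m' = k" | "k < m'" | "m' < k" by linarith
    thus ?thesis
    proof cases
      case 1 thus ?thesis using kin m1 by simp
    next
      case 2
      have T: "TT \<le> k" using up[OF m2] 2 le2 by linarith
      have "\<exists>q. m' = q * dd + k" using cong_le_nat[of k m' dd] 2 cg by simp
      then obtain q where "m' = q * dd + k" ..
      thus ?thesis using L2[OF T k0, of q] by (simp add: add.commute)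
    next
      case 3
      have T: "TT \<le> m'" using down[OF m1] 3 le1 by linarith
      have m'0: "m' > 0" using T TT2 by linarith
      have cg': "[k = m'] (mod dd)" using cg by (rule cong_sym)
      have "\<exists>q. k = q * dd + m'" using cong_le_nat[of m' k dd] 3 cg' by simp
      then obtain q where "k = q * dd + m'" ..
      hence "k \<in> U_set SS m'" using L2[OF T m'0, of q] by (simp add: add.commute)
      thus ?thesis by (rule Usym[OF _ m'0])
    qed
  qed
  define a where "a = k mod dd"
  define I where "I = {i. a + dd * i \<in> U_set SS k}"
  show ?thesis unfolding arith_seq_def
  proof (intro exI[of _ a] exI[of _ I] conjI allI impI)
    fix i j l assume i: "i \<in> I" and l: "l \<in> I" and ij: "i \<le> j" and jl: "j \<le> l"
    have cgj: "[a + dd * j = k] (mod dd)" unfolding a_def cong_def by simp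
    have le1: "a + dd * i \<le> a + dd * j" using ij by simp
    have le2: "a + dd * j \<le> a + dd * l" using jl by simp
    have i': "a + dd * i \<in> U_set SS k" using i unfolding I_def by (rule CollectD)
    have l': "a + dd * l \<in> U_set SS k" using l unfolding I_def by (rule CollectD)
    have "a + dd * j \<in> U_set SS k" by (rule key[OF i' l' le1 le2 cgj])
    thus "j \<in> I" unfolding I_def by (rule CollectI)
  next
    show "U_set SS k = {a + dd * i |i. i \<in> I}"
    proof (intro equalityI subsetI)
      fix m assume m: "m \<in> U_set SS k"
      have "m mod dd = a" using L3[OF m] unfolding a_def cong_def .
      hence "m = a + dd * (m div dd)" using mod_mult_div_eq[of m dd] by simp
      moreover have "m div dd \<in> I" unfolding I_def using m \<open>m = a + dd * (m div dd)\<close> by simp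
      ultimately show "m \<in> {a + dd * i |i. i \<in> I}" by blast
    next
      fix m assume "m \<in> {a + dd * i |i. i \<in> I}"
      then obtain i where "m = a + dd * i" "i \<in> I" by blast
      thus "m \<in> U_set SS k" unfolding I_def by simp
    qed
  qed
qed

end

lemma arith_seq_sub_single:
  assumes "A \<subseteq> {k}"
  shows "arith_seq e A"
proof (cases "A = {}")
  case True
  show ?thesis unfolding arith_seq_def using True
    by (intro exI[of _ 0] exI[of _ "{}::nat set"]) auto
next
  case False
  hence "A = {k}" using assms by blast
  show ?thesis unfolding arith_seq_def using \<open>A = {k}\<close>
    by (intro exI[of _ k] exI[of _ "{0::nat}"]) auto
qed

lemma int_case:
  fixes n0 :: nat
  assumes n1: "n0 \<ge> 1" and N0: "0 \<in> N" and k0: "k > 0"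
  shows "U_set (exp_puiseux (of_nat n0) N) k \<subseteq> {k}"
proof -
  let ?S = "exp_puiseux (of_nat n0 :: rat) N"
  have at1: "a = 1" if a: "a \<in> atoms ?S" for a
  proof (rule ccontr)
    assume ne: "a \<noteq> 1"
    obtain s where s: "s \<in> N" "a = of_nat n0 ^ s" using atom_is_gen[of "of_nat n0" a N] a n1 by auto
    have ge: "n0 ^ s \<ge> 1" using n1 by simp
    have "n0 ^ s \<noteq> 1"
    proof
      assume "n0 ^ s = 1"
      hence "(of_nat n0 :: rat) ^ s = 1" by (metis of_nat_1 of_nat_power)
      thus False using ne s by simp
    qed
    hence ge2: "n0 ^ s \<ge> 2" using ge by linarith
    have one: "(1::rat) \<in> ?S" using exp_puiseux.gen[OF N0, of "of_nat n0"] by simp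
    have m: "of_nat (n0 ^ s - 1) * 1 \<in> ?S" by (rule mult_in_exp_puiseux[OF one])
    have "a = 1 + of_nat (n0 ^ s - 1) * 1" using s ge by (simp add: of_nat_diff)
    moreover have "a \<in> atoms ?S" by (rule a)
    ultimately have "(1::rat) = 0 \<or> (of_nat (n0 ^ s - 1) * 1 :: rat) = 0"
      using one m unfolding atoms_def by blast
    moreover have "(of_nat (n0 ^ s - 1) * 1 :: rat) \<noteq> 0" using ge2 by (simp only: mult_1_right of_nat_eq_0_iff)
    moreover have "(1::rat) \<noteq> 0" by simp
    ultimately show False by blast
  qed
  show ?thesis
  proof
    fix m assume "m \<in> U_set ?S k"
    then obtain as bs where ab: "length as = k" "length bs = m" "set as \<subseteq> atoms ?S" "set bs \<subseteq> atoms ?S"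
      "sum_list as = sum_list bs" unfolding U_set_def by blast
    have "set as \<subseteq> {1}" "set bs \<subseteq> {1}" using ab(3,4) at1 by auto
    hence "(of_nat k :: rat) = of_nat m" using ab sum_list_ones by metis
    thus "m \<in> {k}" by simp
  qed
qed

lemma unit_case:
  fixes d0 :: nat
  assumes d2: "d0 \<ge> 2" and nm: "numerical_monoid N"
  shows "atoms (exp_puiseux (1 / of_nat d0) N) = {}"
proof (rule ccontr)
  let ?r = "(1 / of_nat d0 :: rat)"
  let ?S = "exp_puiseux ?r N"
  assume "atoms ?S \<noteq> {}"
  then obtain a where a: "a \<in> atoms ?S" by blast
  obtain s where s: "s \<in> N" "a = ?r ^ s" using atom_is_gen[of ?r a N] a d2 by auto
  have "finite (UNIV - N)" using nm unfolding numerical_monoid_def by blast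
  then obtain c0 where "\<forall>x\<in>UNIV - N. x \<le> c0" using finite_nat_set_iff_bounded_le by blast
  hence cN: "\<forall>x\<ge>Suc c0. x \<in> N" by force
  define B where "B = Suc (max s c0)"
  have BN: "B \<in> N" using cN B_def by simp
  have sB: "s < B" using B_def by simp
  have gB: "?r ^ B \<in> ?S" using BN by (rule exp_puiseux.gen)
  define j where "j = d0 ^ (B - s) - 1"
  have pw: "d0 ^ (B - s) \<ge> d0"
    using power_increasing[of 1 "B - s" d0] sB d2 by simp
  have j1: "j \<ge> 1" using pw d2 unfolding j_def by linarith
  have "?r ^ s = of_nat (d0 ^ (B - s)) * ?r ^ B"
  proof -
    have "?r ^ s * of_nat d0 ^ s = 1" using d2 by (simp add: power_one_over)
    have "(of_nat d0 :: rat) ^ B = of_nat d0 ^ s * of_nat d0 ^ (B - s)" using sB by (simp flip: power_add)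
    thus ?thesis using d2 by (simp add: power_one_over)
  qed
  also have "\<dots> = ?r ^ B + of_nat j * ?r ^ B"
    using j1 unfolding j_def by (simp add: of_nat_diff algebra_simps)
  finally have e: "a = ?r ^ B + of_nat j * ?r ^ B" using s by simp
  have m: "of_nat j * ?r ^ B \<in> ?S" by (rule mult_in_exp_puiseux[OF gB])
  have "?r ^ B = 0 \<or> of_nat j * ?r ^ B = 0" using a e gB m unfolding atoms_def by blast
  thus False using j1 d2 by simp
qed

theorem mainTheorem4:
  fixes r :: rat and N :: "nat set" and k :: nat
  assumes "r > 0" and "numerical_monoid N" and "atomic (exp_puiseux r N)" and "k > 0"
  shows "arith_seq (nat \<bar>numer r - denom r\<bar>) (U_set (exp_puiseux r N) k)"
proof -
  obtain p q where pq: "quotient_of r = (p, q)" by (cases "quotient_of r") auto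
  have q0: "q > 0" using quotient_of_denom_pos[OF pq] .
  have rpq: "r = of_int p / of_int q" using quotient_of_div[OF pq] .
  have copq: "coprime p q" using quotient_of_coprime[OF pq] .
  have p0: "p > 0" using assms(1) rpq q0 by (simp add: zero_less_divide_iff)
  define n0 where "n0 = nat p"
  define d0 where "d0 = nat q"
  have pn: "p = int n0" and qd: "q = int d0" using p0 q0 unfolding n0_def d0_def by simp_all
  have r_eq: "r = of_nat n0 / of_nat d0" using rpq pn qd by simp
  have cop: "coprime n0 d0" using copq pn qd by (simp add: coprime_int_iff)
  have nr: "numer r = int n0" "denom r = int d0" using pq pn qd unfolding numer_def denom_def by simp_all
  have n1: "n0 \<ge> 1" "d0 \<ge> 1" using p0 q0 pn qd by simp_all
  have N0: "0 \<in> N" using assms(2) unfolding numerical_monoid_def by blast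
  show ?thesis
  proof (cases "d0 = 1")
    case True
    have "r = of_nat n0" using r_eq True by simp
    thus ?thesis using int_case[OF n1(1) N0 assms(4)] by (intro arith_seq_sub_single) simp
  next
    case False
    hence d2: "d0 \<ge> 2" using n1 by simp
    show ?thesis
    proof (cases "n0 = 1")
      case True
      have "r = 1 / of_nat d0" using r_eq True by simp
      hence "atoms (exp_puiseux r N) = {}" using unit_case[OF d2 assms(2)] by simp
      hence "U_set (exp_puiseux r N) k = {}" unfolding U_set_def using assms(4)
        by (auto simp: length_greater_0_conv[symmetric] dest: length_greater_0_conv[THEN iffD1])
      thus ?thesis by (intro arith_seq_sub_single) simp
    next
      case False
      hence n2: "n0 \<ge> 2" using n1 by simp
      show ?thesis using main_gen[OF d2 n2 cop assms(2) assms(4)] r_eq nr by simp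
    qed
  qed
qed

end
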